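(* Suppose A1–A3 and A4' hold and let $\{x_k\}$ be generated by Algorithm 1. Then $\lim_{k\to\infty}\|\nabla f(x_k)\|=0$.
   Context: Let $(X,\langle\cdot,\cdot\rangle)$ be a real Hilbert space with induced norm $\|\cdot\|$, and $f:X\to\mathbb{R}$ Fréchet differentiable with gradient $\nabla f$. Algorithm 1 (general non-monotone descent algorithm): parameters $x_0\in X$, $\alpha_0>0$, $\beta,\rho\in(0,1)$. For $k=0,1,2,\dots$: choose $d_k\in X$ with $\langle\nabla f(x_k),d_k\rangle<0$; then for $l=0,1,2,\dots$ choose a number $\nu_{k,l}\ge 0$ and test $$f(x_k+\alpha_k\beta^l d_k)\le f(x_k)+\rho\alpha_k\beta^l\langle\nabla f(x_k),d_k\rangle+\nu_{k,l};$$ let $l_k$ be the first $l$ for which this holds, set $\nu_k:=\nu_{k,l_k}$, $x_{k+1}=x_k+\alpha_k\beta^{l_k}d_k$ and $\alpha_{k+1}=\alpha_k\beta^{l_k-1}$. It is assumed the algorithm generates infinite sequences (all $l_k$ finite). Assumptions: A1: $\nabla f$ is Lipschitz continuous with constant $L>0$. A2: there is $f_{low}\in\mathbb{R}$ with $f(x)\ge f_{low}$ for all $x\in X$. A3: there are constants $c_1,c_2>0$ with $\langle\nabla f(x_k),d_k\rangle\le -c_1\|\nabla f(x_k)\|^2$ and $\|d_k\|\le c_2\|\nabla f(x_k)\|$ for all $k$. A4': $\nu_k=o(\|\nabla f(x_k)\|^2)$, i.e. for every $\delta>0$ there is $n\in\mathbb{N}$ with $\nu_k\le\delta\|\nabla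 f(x_k)\|^2$ for all $k\ge n$. *)

theory Defs
  imports "HOL-Analysis.Analysis"
begin

end

theory Submission
  imports Defs "HOL-Analysis.Analysis"
begin

lemma descent_lemma:
  fixes f :: "'a :: real_inner \<Rightarrow> real" and g :: "'a \<Rightarrow> 'a"
  assumes grad: "\<And>y. (f has_derivative (\<lambda>h. inner (g y) h)) (at y)"
    and lip: "L-lipschitz_on UNIV g" and t: "t > 0"
  shows "f (x + t *\<^sub>R d) \<le> f x + t * inner (g x) d + L * t\<^sup>2 * (norm d)\<^sup>2"
proof -
  define \<phi> where "\<phi> s = f (x + s *\<^sub>R d)" for s
  have der: "(\<phi> has_derivative (\<lambda>h. inner (g (x + s *\<^sub>R d)) (h *\<^sub>R d))) (at s within {0..t})" for s
  proof -
    have "((\<lambda>s. x + s *\<^sub>R d) has_derivative (\<lambda>h. h *\<^sub>R d)) (at s within {0..t})"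
      by (auto intro!: derivative_eq_intros)
    from has_derivative_compose[OF this grad] show ?thesis unfolding \<phi>_def o_def by simp
  qed
  obtain s where s: "s \<in> {0<..<t}" and eq: "\<phi> t - \<phi> 0 = inner (g (x + s *\<^sub>R d)) ((t - 0) *\<^sub>R d)"
    using mvt_simple[OF t der] by blast
  have "inner (g (x + s *\<^sub>R d) - g x) d \<le> norm (g (x + s *\<^sub>R d) - g x) * norm d"
    by (rule norm_cauchy_schwarz)
  also have "norm (g (x + s *\<^sub>R d) - g x) \<le> L * norm (s *\<^sub>R d)"
    using lipschitz_onD[OF lip, of "x + s *\<^sub>R d" x] by (simp add: dist_norm)
  hence "norm (g (x + s *\<^sub>R d) - g x) * norm d \<le> L * norm (s *\<^sub>R d) * norm d"
    by (simp add: mult_right_mono)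
  also have "\<dots> \<le> L * t * (norm d)\<^sup>2"
  proof -
    have L: "L \<ge> 0" using lip by (simp add: lipschitz_on_def)
    have "L * norm (s *\<^sub>R d) * norm d = (L * s) * (norm d)\<^sup>2" using s by (simp add: power2_eq_square)
    also have "\<dots> \<le> (L * t) * (norm d)\<^sup>2" using s L by (intro mult_right_mono mult_left_mono) auto
    finally show ?thesis .
  qed
  finally have "inner (g (x + s *\<^sub>R d)) d \<le> inner (g x) d + L * t * (norm d)\<^sup>2"
    by (simp add: inner_diff_left)
  hence "t * inner (g (x + s *\<^sub>R d)) d \<le> t * (inner (g x) d + L * t * (norm d)\<^sup>2)"
    using t by (intro mult_left_mono) auto
  thus ?thesis using eq unfolding \<phi>_def by (simp add: power2_eq_square algebra_simps)
qed

theorem theorem4: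
  fixes f :: "'a :: {real_inner, complete_space} \<Rightarrow> real"
    and g :: "'a \<Rightarrow> 'a"
    and x d :: "nat \<Rightarrow> 'a"
    and \<alpha> :: "nat \<Rightarrow> real"
    and \<beta> \<rho> L f_low c1 c2 :: real
    and \<nu> :: "nat \<Rightarrow> nat \<Rightarrow> real"
    and l :: "nat \<Rightarrow> nat"
  assumes grad: "\<And>y. (f has_derivative (\<lambda>h. inner (g y) h)) (at y)"
    and alpha0: "\<alpha> 0 > 0"
    and beta: "0 < \<beta>" "\<beta> < 1"
    and rho: "0 < \<rho>" "\<rho> < 1"
    and descent: "\<And>k. inner (g (x k)) (d k) < 0"
    and nu_nonneg: "\<And>k j. \<nu> k j \<ge> 0"
    and ls_accept: "\<And>k. f (x k + (\<alpha> k * \<beta> ^ l k) *\<^sub>R d k)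
        \<le> f (x k) + \<rho> * \<alpha> k * \<beta> ^ l k * inner (g (x k)) (d k) + \<nu> k (l k)"
    and ls_first: "\<And>k j. j < l k \<Longrightarrow> \<not> (f (x k + (\<alpha> k * \<beta> ^ j) *\<^sub>R d k)
        \<le> f (x k) + \<rho> * \<alpha> k * \<beta> ^ j * inner (g (x k)) (d k) + \<nu> k j)"
    and x_step: "\<And>k. x (Suc k) = x k + (\<alpha> k * \<beta> ^ l k) *\<^sub>R d k"
    and alpha_step: "\<And>k. \<alpha> (Suc k) = \<alpha> k * \<beta> powi (int (l k) - 1)"
    and A1: "L > 0" "L-lipschitz_on UNIV g"
    and A2: "\<And>y. f y \<ge> f_low"
    and A3: "c1 > 0" "c2 > 0"
      "\<And>k. inner (g (x k)) (d k) \<le> - c1 * (norm (g (x k)))\<^sup>2"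
      "\<And>k. norm (d k) \<le> c2 * norm (g (x k))"
    and A4': "\<And>\<delta>. \<delta> > 0 \<Longrightarrow> \<exists>n. \<forall>k\<ge>n. \<nu> k (l k) \<le> \<delta> * (norm (g (x k)))\<^sup>2"
  shows "(\<lambda>k. norm (g (x k))) \<longlonglongrightarrow> 0"
proof -
  define G where "G k = norm (g (x k))" for k
  define \<tau> where "\<tau> = (1 - \<rho>) * c1 / (L * c2\<^sup>2)"
  have \<tau>pos: "\<tau> > 0" using rho A1 A3 by (simp add: \<tau>_def)
  have Gpos: "G k > 0" for k
  proof (rule ccontr)
    assume "\<not> G k > 0"
    hence "g (x k) = 0" by (simp add: G_def)
    thus False using descent[of k] by simp
  qed
  have fail: "\<alpha> k * \<beta> ^ j > \<tau>" if j: "j < l k" and apos: "\<alpha> k > 0" for k j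
  proof -
    define t where "t = \<alpha> k * \<beta> ^ j"
    have t: "t > 0" using apos beta by (simp add: t_def)
    have nf: "f (x k + t *\<^sub>R d k) > f (x k) + \<rho> * t * inner (g (x k)) (d k) + \<nu> k j"
      using ls_first[OF j] by (simp add: t_def mult.assoc)
    have dl: "f (x k + t *\<^sub>R d k) \<le> f (x k) + t * inner (g (x k)) (d k) + L * t\<^sup>2 * (norm (d k))\<^sup>2"
      by (rule descent_lemma[OF grad A1(2) t])
    have "\<rho> * t * inner (g (x k)) (d k) < t * inner (g (x k)) (d k) + L * t\<^sup>2 * (norm (d k))\<^sup>2"
      using nf dl nu_nonneg[of k j] by linarith
    hence "t * ((1 - \<rho>) * (- inner (g (x k)) (d k))) < t * (L * t * (norm (d k))\<^sup>2)"
      by (simp add: algebra_simps power2_eq_square)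
    hence 1: "(1 - \<rho>) * (- inner (g (x k)) (d k)) < L * t * (norm (d k))\<^sup>2"
      using mult_less_cancel_left_pos[OF t] by blast
    have "(1 - \<rho>) * (c1 * (G k)\<^sup>2) \<le> (1 - \<rho>) * (- inner (g (x k)) (d k))"
      using A3(3)[of k] rho by (intro mult_left_mono) (auto simp: G_def)
    moreover have "(norm (d k))\<^sup>2 \<le> (c2 * G k)\<^sup>2"
      using A3(4)[of k] by (intro power_mono) (auto simp: G_def)
    hence "L * t * (norm (d k))\<^sup>2 \<le> L * t * (c2 * G k)\<^sup>2"
      using A1 t by (intro mult_left_mono) auto
    ultimately have "((1 - \<rho>) * c1) * (G k)\<^sup>2 < (L * t * c2\<^sup>2) * (G k)\<^sup>2"
      using 1 by (simp add: power_mult_distrib algebra_simps)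
    hence "(1 - \<rho>) * c1 < L * t * c2\<^sup>2" using Gpos[of k] by simp
    hence "(1 - \<rho>) * c1 / (L * c2\<^sup>2) < t" using A1 A3 by (simp add: field_simps)
    thus ?thesis by (simp add: \<tau>_def t_def)
  qed
  define m where "m = min (\<alpha> 0) \<tau>"
  have mpos: "m > 0" using alpha0 \<tau>pos by (simp add: m_def)
  have alow: "\<alpha> k \<ge> m" for k
  proof (induction k)
    case 0 then show ?case by (simp add: m_def)
  next
    case (Suc k)
    have apos: "\<alpha> k > 0" using Suc mpos by linarith
    show ?case
    proof (cases "l k = 0")
      case True
      hence "\<alpha> (Suc k) = \<alpha> k / \<beta>" using alpha_step[of k] by (simp add: power_int_minus1_right field_simps)
      moreover have "\<alpha> k / \<beta> \<ge> \<alpha> k" using apos beta by (simp add: field_simps)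
      ultimately show ?thesis using Suc by linarith
    next
      case False
      hence "int (l k) - 1 = int (l k - 1)" by simp
      hence "\<alpha> (Suc k) = \<alpha> k * \<beta> ^ (l k - 1)" using alpha_step[of k] by (simp only: power_int_of_nat)
      moreover have "\<alpha> k * \<beta> ^ (l k - 1) > \<tau>" using fail[OF _ apos] False by simp
      ultimately show ?thesis by (simp add: m_def)
    qed
  qed
  have tlow: "\<alpha> k * \<beta> ^ l k \<ge> \<beta> * m" for k
  proof (cases "l k = 0")
    case True
    have "\<beta> * m \<le> 1 * m" using beta mpos by (intro mult_right_mono) auto
    thus ?thesis using alow[of k] True by simp
  next
    case False
    have apos: "\<alpha> k > 0" using alow[of k] mpos by linarith
    have "\<alpha> k * \<beta> ^ (l k - 1) > \<tau>" using fail[OF _ apos] False by simp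
    hence "\<beta> * (\<alpha> k * \<beta> ^ (l k - 1)) \<ge> \<beta> * m" using beta by (intro mult_left_mono) (auto simp: m_def)
    moreover have "\<beta> * (\<alpha> k * \<beta> ^ (l k - 1)) = \<alpha> k * \<beta> ^ l k"
    proof -
      obtain j where "l k = Suc j" using False not0_implies_Suc by blast
      thus ?thesis by simp
    qed
    ultimately show ?thesis by linarith
  qed
  define c where "c = \<rho> * c1 * \<beta> * m / 2"
  have cpos: "c > 0" using rho A3 beta mpos by (simp add: c_def)
  obtain n where n: "\<And>k. k \<ge> n \<Longrightarrow> \<nu> k (l k) \<le> c * (G k)\<^sup>2"
    using A4'[OF cpos] unfolding G_def by blast
  have dec: "f (x (Suc k)) \<le> f (x k) - c * (G k)\<^sup>2" if "k \<ge> n" for k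
  proof -
    have "\<rho> * (\<alpha> k * \<beta> ^ l k) * inner (g (x k)) (d k) \<le> \<rho> * (\<alpha> k * \<beta> ^ l k) * (- c1 * (G k)\<^sup>2)"
      using A3(3)[of k] rho alow[of k] mpos beta by (intro mult_left_mono) (auto simp: G_def)
    also have "\<dots> = - (\<rho> * c1 * (G k)\<^sup>2) * (\<alpha> k * \<beta> ^ l k)" by simp
    also have "\<dots> \<le> - (\<rho> * c1 * (G k)\<^sup>2) * (\<beta> * m)"
      using tlow[of k] rho A3 by (intro mult_left_mono_neg) auto
    also have "\<dots> = - 2 * c * (G k)\<^sup>2" by (simp add: c_def)
    finally have "\<rho> * \<alpha> k * \<beta> ^ l k * inner (g (x k)) (d k) \<le> - 2 * c * (G k)\<^sup>2"
      by (simp add: mult.assoc)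
    thus ?thesis using ls_accept[of k] x_step[of k] n[OF that] by simp
  qed
  have part: "c * (\<Sum>k<N. (G (k + n))\<^sup>2) \<le> f (x n) - f (x (N + n))" for N
  proof (induction N)
    case 0 then show ?case by simp
  next
    case (Suc N)
    have "f (x (Suc (N + n))) \<le> f (x (N + n)) - c * (G (N + n))\<^sup>2" by (rule dec) simp
    thus ?case using Suc by (simp add: algebra_simps)
  qed
  have bnd: "(\<Sum>k<N. (G (k + n))\<^sup>2) \<le> (f (x n) - f_low) / c" for N
  proof -
    have "c * (\<Sum>k<N. (G (k + n))\<^sup>2) \<le> f (x n) - f_low" using part[of N] A2[of "x (N + n)"] by linarith
    thus ?thesis using cpos by (simp add: field_simps mult.commute)
  qed
  have "summable (\<lambda>k. (G (k + n))\<^sup>2)"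
    by (rule summableI_nonneg_bounded[OF _ bnd]) simp
  hence "(\<lambda>k. (G (k + n))\<^sup>2) \<longlonglongrightarrow> 0" by (rule summable_LIMSEQ_zero)
  hence "(\<lambda>k. sqrt ((G (k + n))\<^sup>2)) \<longlonglongrightarrow> sqrt 0" by (rule tendsto_real_sqrt)
  hence "(\<lambda>k. G (k + n)) \<longlonglongrightarrow> 0" using Gpos by (simp add: less_imp_le)
  hence "G \<longlonglongrightarrow> 0" by (rule LIMSEQ_offset)
  thus ?thesis by (simp add: G_def[abs_def])
qed

end
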